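(* Let $K$ be a compact Hausdorff space, and let $f,g$ be two non-zero elements of $B_{C(K)}$. Then $B_{C(K)}\subset \overline B(f,1)\cup\overline B(g,1)$ if and only if there exist an isolated point $u$ of $K$ and real numbers $c,d$ such that $f=c\mathds{1}_{\{u\}}$, $g=d\mathds{1}_{\{u\}}$ and $cd<0$.
   Context: $C(K)$ is the Banach space of real-valued continuous functions on $K$ with the supremum norm, $B_{C(K)}$ its closed unit ball, and $\overline B(h,r)$ denotes the closed ball in $C(K)$ with center $h$ and radius $r$. $\mathds{1}_{\{u\}}$ is the indicator function of $\{u\}$. *)

theory Defs
  imports "HOL-Analysis.Analysis"
begin

end

theory Submission
  imports Defs
begin

lemma haus_t2: "Hausdorff_space (euclidean :: ('a::t2_space) topology)"
  unfolding Hausdorff_space_def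
  by (metis disjnt_def open_openin separation_t2)

lemma sep_fun:
  fixes x y :: "'a::t2_space"
  assumes "compact (UNIV :: 'a set)" "x \<noteq> y"
  obtains \<phi> :: "'a \<Rightarrow> real" where "continuous_on UNIV \<phi>" "\<And>z. 0 \<le> \<phi> z \<and> \<phi> z \<le> 1"
    "\<phi> x = 1" "\<phi> y = 0"
proof -
  have cs: "compact_space (euclidean :: 'a topology)"
    using assms(1) by (simp add: compact_space_def compactin_euclidean_iff)
  have "normal_space (euclidean :: 'a topology)"
    using compact_Hausdorff_or_regular_imp_normal_space[OF cs] haus_t2 by blast
  then have cr: "completely_regular_space (euclidean :: 'a topology)"
    using normal_imp_completely_regular_space haus_t2 by blast
  have "closedin euclidean {x}" by simp
  then obtain h :: "'a \<Rightarrow> real" where h: "continuous_map euclidean (top_of_set {0..1}) h"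
    "h y = 0" "h ` {x} \<subseteq> {1}"
    using cr assms(2) unfolding completely_regular_space_def by (metis DiffI UNIV_I singletonD topspace_euclidean)
  have "continuous_on UNIV h" "\<And>z. 0 \<le> h z \<and> h z \<le> 1"
    using h(1) by (auto simp: continuous_map_in_subtopology)
  then show ?thesis using that h by auto
qed

lemma dist_le_iff:
  fixes f h :: "'a::topological_space \<Rightarrow>\<^sub>C real"
  shows "dist f h \<le> r \<longleftrightarrow> (\<forall>x. \<bar>f x - h x\<bar> \<le> r)"
  using dist_bounded[where f=f and g=h] dist_bound[where f=f and g=h and b=r]
  by (metis dist_real_def order_trans)

lemma mk_bc:
  fixes \<phi> :: "'a::topological_space \<Rightarrow> real"
  assumes "continuous_on UNIV \<phi>" "\<And>z. 0 \<le> \<phi> z \<and> \<phi> z \<le> 1" "\<bar>a\<bar> \<le> 1" "\<bar>b\<bar> \<le> 1"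
  shows "(\<lambda>z. b + (a - b) * \<phi> z) \<in> bcontfun" "\<And>z. \<bar>b + (a - b) * \<phi> z\<bar> \<le> 1"
proof -
  show le: "\<bar>b + (a - b) * \<phi> z\<bar> \<le> 1" for z
  proof -
    have "b + (a - b) * \<phi> z = \<phi> z * a + (1 - \<phi> z) * b" by (simp add: algebra_simps)
    also have "\<bar>\<dots>\<bar> \<le> \<phi> z * \<bar>a\<bar> + (1 - \<phi> z) * \<bar>b\<bar>"
      using assms(2)[of z] abs_triangle_ineq[of "\<phi> z * a" "(1 - \<phi> z) * b"] by (simp add: abs_mult)
    also have "\<dots> \<le> \<phi> z * 1 + (1 - \<phi> z) * 1"
      using assms(2)[of z] assms(3,4) by (intro add_mono mult_left_mono) auto
    finally show ?thesis by simp
  qed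
  show "(\<lambda>z. b + (a - b) * \<phi> z) \<in> bcontfun"
    by (rule bcontfun_normI[where b=1]) (auto intro!: continuous_intros assms(1) simp: le)
qed

theorem lemma2p3:
  fixes f g :: "('a::t2_space) \<Rightarrow>\<^sub>C real"
  assumes "compact (UNIV :: 'a set)"
    and "f \<in> cball 0 1" and "g \<in> cball 0 1"
    and "f \<noteq> 0" and "g \<noteq> 0"
  shows "cball 0 1 \<subseteq> cball f 1 \<union> cball g 1 \<longleftrightarrow>
    (\<exists>u c d. u isolated_in (UNIV :: 'a set) \<and>
       (\<forall>x. apply_bcontfun f x = c * indicator {u} x) \<and>
       (\<forall>x. apply_bcontfun g x = d * indicator {u} x) \<and> c * d < 0)"
proof -
  have ball_iff: "h \<in> cball k 1 \<longleftrightarrow> (\<forall>x. \<bar>k x - h x\<bar> \<le> 1)" for h k :: "'a \<Rightarrow>\<^sub>C real"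
    using dist_le_iff[of k h 1] by (simp add: mem_cball)
  have f1: "\<bar>f x\<bar> \<le> 1" and g1: "\<bar>g x\<bar> \<le> 1" for x
    using assms(2,3) ball_iff[of f 0] ball_iff[of g 0] by auto
  show ?thesis
  proof
    assume C: "cball 0 1 \<subseteq> cball f 1 \<union> cball g 1"
    have cov: "\<exists>x. \<bar>f x - h x\<bar> > 1 \<Longrightarrow> \<exists>x. \<bar>g x - h x\<bar> > 1 \<Longrightarrow> \<exists>x. \<bar>h x\<bar> > 1"
      for h :: "'a \<Rightarrow>\<^sub>C real"
    proof (rule ccontr)
      assume a1: "\<exists>x. \<bar>f x - h x\<bar> > 1" and a2: "\<exists>x. \<bar>g x - h x\<bar> > 1"
        and "\<nexists>x. \<bar>h x\<bar> > 1"
      then have "h \<in> cball 0 1" using ball_iff[of h 0] by (auto simp: zero_bcontfun.rep_eq not_less)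
      then have "h \<in> cball f 1 \<or> h \<in> cball g 1" using C by blast
      then show False using a1 a2 ball_iff[of h f] ball_iff[of h g] by (meson not_le)
    qed
    have A: "\<not> f x * g x > 0" for x
    proof
      assume p: "f x * g x > 0"
      define s where "s = sgn (f x)"
      have s: "\<bar>f x - (- s)\<bar> > 1" "\<bar>g x - (- s)\<bar> > 1"
        using p by (auto simp: s_def sgn_if zero_less_mult_iff)
      have "\<exists>y. \<bar>apply_bcontfun (const_bcontfun (-s)) y\<bar> > 1"
        using cov[of "const_bcontfun (-s)"] s by (auto simp: const_bcontfun.rep_eq)
      then show False by (simp add: const_bcontfun.rep_eq s_def sgn_if split: if_splits)
    qed
    have B: "x = y" if fx: "f x \<noteq> 0" and gy: "g y \<noteq> 0" for x y
    proof (rule ccontr)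
      assume "x \<noteq> y"
      then obtain \<phi> :: "'a \<Rightarrow> real" where ph: "continuous_on UNIV \<phi>" "\<And>z. 0 \<le> \<phi> z \<and> \<phi> z \<le> 1"
        "\<phi> x = 1" "\<phi> y = 0" using sep_fun[OF assms(1)] by blast
      define a where "a = - sgn (f x)"
      define b where "b = - sgn (g y)"
      have ab: "\<bar>a\<bar> \<le> 1" "\<bar>b\<bar> \<le> 1" by (auto simp: a_def b_def sgn_if)
      have M: "(\<lambda>z. b + (a - b) * \<phi> z) \<in> bcontfun" "\<And>z. \<bar>b + (a - b) * \<phi> z\<bar> \<le> 1"
        using mk_bc[of \<phi> a b] ph(1,2) ab by blast+
      define h where "h = Bcontfun (\<lambda>z. b + (a - b) * \<phi> z)"
      have hh: "apply_bcontfun h = (\<lambda>z. b + (a - b) * \<phi> z)"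
        unfolding h_def using M(1) by (rule Bcontfun_inverse)
      have "\<exists>z. \<bar>h z\<bar> > 1"
      proof (rule cov[of h])
        show "\<exists>z. \<bar>f z - h z\<bar> > 1"
          by (rule exI[of _ x]) (use fx in \<open>auto simp: hh ph a_def sgn_if\<close>)
        show "\<exists>z. \<bar>g z - h z\<bar> > 1"
          by (rule exI[of _ y]) (use gy in \<open>auto simp: hh ph b_def sgn_if\<close>)
      qed
      then show False using M(2) hh by (metis not_le)
    qed
    obtain u where fu: "f u \<noteq> 0"
      using assms(4) bcontfun_eqI[of f 0] by (auto simp: zero_bcontfun.rep_eq)
    obtain v where gv: "g v \<noteq> 0"
      using assms(5) bcontfun_eqI[of g 0] by (auto simp: zero_bcontfun.rep_eq)
    have uv: "v = u" using B fu gv by blast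
    have fz: "f x = 0" if "x \<noteq> u" for x using B[of x v] gv uv that by auto
    have gz: "g x = 0" if "x \<noteq> u" for x using B[of u x] fu that by auto
    have "{x. f x \<noteq> 0} = {u}" using fz fu by auto
    moreover have "open {x. apply_bcontfun f x \<noteq> (\<lambda>_. 0) x}"
      by (rule open_Collect_neq) (auto intro: continuous_intros)
    ultimately have iso: "u isolated_in (UNIV :: 'a set)"
      unfolding isolated_in_def by (metis inf_top.right_neutral iso_tuple_UNIV_I)
    have cd: "f u * g u < 0"
      using A[of u] fu gv uv by (metis linorder_neqE_linordered_idom mult_eq_0_iff)
    show "\<exists>u c d. u isolated_in (UNIV :: 'a set) \<and>
       (\<forall>x. apply_bcontfun f x = c * indicator {u} x) \<and>
       (\<forall>x. apply_bcontfun g x = d * indicator {u} x) \<and> c * d < 0"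
    proof (intro exI conjI allI)
      show "u isolated_in (UNIV :: 'a set)" by (rule iso)
      show "f u * g u < 0" by (rule cd)
      fix x
      show "f x = f u * indicator {u} x" by (cases "x = u") (simp_all add: fz)
      show "g x = g u * indicator {u} x" by (cases "x = u") (simp_all add: gz)
    qed
  next
    assume "\<exists>u c d. u isolated_in (UNIV :: 'a set) \<and>
       (\<forall>x. apply_bcontfun f x = c * indicator {u} x) \<and>
       (\<forall>x. apply_bcontfun g x = d * indicator {u} x) \<and> c * d < 0"
    then obtain u c d where F: "\<And>x. f x = c * indicator {u} x"
      and G: "\<And>x. g x = d * indicator {u} x" and cd: "c * d < 0" by blast
    have c1: "\<bar>c\<bar> \<le> 1" using f1[of u] F[of u] by simp
    have d1: "\<bar>d\<bar> \<le> 1" using g1[of u] G[of u] by simp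
    show "cball 0 1 \<subseteq> cball f 1 \<union> cball g 1"
    proof
      fix h assume "h \<in> cball (0 :: 'a \<Rightarrow>\<^sub>C real) 1"
      then have h1: "\<bar>h x\<bar> \<le> 1" for x using ball_iff[of h 0] by (auto simp: zero_bcontfun.rep_eq)
      have "\<bar>c - h u\<bar> \<le> 1 \<or> \<bar>d - h u\<bar> \<le> 1"
        using h1[of u] c1 d1 cd by (smt (verit) mult_nonneg_nonneg mult_nonpos_nonpos)
      then show "h \<in> cball f 1 \<union> cball g 1"
        unfolding Un_iff ball_iff F G using h1 by (auto simp: indicator_def)
    qed
  qed
qed

end
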